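(* Let $\lambda\neq 0$ and $F(t)=F(t;\lambda)=\frac{1}{(1+t)^{\lambda}+1}$. Then for every positive integer $N$, $$\left(\frac{d}{dt}\right)^N F(t)=\frac{(-1)^N\lambda}{(1+t)^N}\sum_{i=1}^{N+1}a_{i-1}(N;\lambda)F(t)^i,$$ where $a_0(N;\lambda)=(N+\lambda-1)_{N-1}$, $a_N(N;\lambda)=(-1)^N\lambda^{N-1}N!$, and for $1\le j\le N-1$, $$a_j(N;\lambda)=(-1)^j j!\,\lambda^j\sum_{i_j=0}^{N-j}\sum_{i_{j-1}=0}^{N-j-i_j}\cdots\sum_{i_1=0}^{N-j-i_j-\cdots-i_2}\ \prod_{\ell=1}^{j}\Bigl(N+(\ell+1)\lambda-(i_j+\cdots+i_{\ell+1})-(j-\ell)-1\Bigr)_{i_\ell}\cdot\Bigl(N+\lambda-S-j-1\Bigr)_{N-S-j-1},$$ with $S=i_1+\cdots+i_j$ (the empty sum $i_j+\cdots+i_{j+1}$ being $0$). Explicitly, the product is $(N+(j+1)\lambda-1)_{i_j}(N+j\lambda-i_j-2)_{i_{j-1}}\cdots(N+2\lambda-i_j-\cdots-i_2-j)_{i_1}$.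
   Context: $(x)_n=x(x-1)\cdots(x-n+1)$ for $n\ge1$, $(x)_0=1$, and, for the boundary terms where the index equals $-1$, $(x)_{-1}=\frac{1}{x+1}$ (so that e.g. $(\lambda-1)_{-1}=1/\lambda$). *)

theory Defs
  imports "HOL-Analysis.Analysis"
begin

text \<open>Falling factorial with integer index: (x)_n = x(x-1)...(x-n+1) for n >= 1,
  (x)_0 = 1, and (x)_{-1} = 1/(x+1).  Other negative indices do not occur.\<close>
definition ffact :: "real \<Rightarrow> int \<Rightarrow> real" where
  "ffact x n = (if n \<ge> 0 then (\<Prod>k<nat n. x - real k)
                else if n = -1 then 1 / (x + 1) else undefined)"

definition F :: "real \<Rightarrow> real \<Rightarrow> real" where
  "F lam t = 1 / ((1 + t) powr lam + 1)"

text \<open>Index tuples (i_1,...,i_j) of the nested sum, as functions supported on {1..j};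
  the nested bounds are exactly i_1 + ... + i_j <= N - j.\<close>
definition idx :: "nat \<Rightarrow> nat \<Rightarrow> (nat \<Rightarrow> nat) set" where
  "idx N j = {i. (\<forall>l. l \<notin> {1..j} \<longrightarrow> i l = 0) \<and> (\<Sum>l=1..j. i l) \<le> N - j}"

definition coef :: "nat \<Rightarrow> nat \<Rightarrow> real \<Rightarrow> real" where
  "coef j N lam =
    (if j = 0 then ffact (real N + lam - 1) (int N - 1)
     else if j = N then (-1) ^ N * lam ^ (N - 1) * fact N
     else (-1) ^ j * fact j * lam ^ j *
       (\<Sum>i\<in>idx N j.
          (\<Prod>l=1..j. ffact (real N + real (l + 1) * lam - real (\<Sum>m=l+1..j. i m)
                               - real (j - l) - 1) (int (i l)))
          * ffact (real N + lam - real (\<Sum>l=1..j. i l) - real j - 1)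
                  (int N - int (\<Sum>l=1..j. i l) - int j - 1)))"

end

theory Submission imports Defs begin

definition A :: "nat \<Rightarrow> nat \<Rightarrow> real \<Rightarrow> real" where
  "A j N lam = (\<Sum>i\<in>idx N j.
          (\<Prod>l=1..j. ffact (real N + real (l + 1) * lam - real (\<Sum>m=l+1..j. i m)
                               - real (j - l) - 1) (int (i l)))
          * ffact (real N + lam - real (\<Sum>l=1..j. i l) - real j - 1)
                  (int N - int (\<Sum>l=1..j. i l) - int j - 1))"

lemma idx_finite: "finite (idx N j)"
proof -
  have "idx N j \<subseteq> {f. \<forall>x. (x \<in> {1..j} \<longrightarrow> f x \<in> {0..N}) \<and> (x \<notin> {1..j} \<longrightarrow> f x = 0)}"
  proof
    fix f assume f: "f \<in> idx N j"
    have "f x \<le> N" if "x \<in> {1..j}" for x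
    proof -
      have "f x \<le> (\<Sum>l=1..j. f l)" using that by (intro member_le_sum) auto
      thus ?thesis using f unfolding idx_def by auto
    qed
    thus "f \<in> {f. \<forall>x. (x \<in> {1..j} \<longrightarrow> f x \<in> {0..N}) \<and> (x \<notin> {1..j} \<longrightarrow> f x = 0)}"
      using f unfolding idx_def by auto
  qed
  thus ?thesis by (rule finite_subset) (rule finite_set_of_finite_funs; simp)
qed

lemma idx_0: "idx N 0 = {\<lambda>_. 0}"
  unfolding idx_def by auto

lemma ffact_Suc: "ffact x (int (Suc k)) = x * ffact (x - 1) (int k)"
proof -
  have "(\<Prod>i<Suc k. x - real i) = (x - real 0) * (\<Prod>i<k. x - real (Suc i))"
    by (rule prod.lessThan_Suc_shift)
  moreover have "ffact x (int (Suc k)) = (\<Prod>i<Suc k. x - real i)"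
    unfolding ffact_def by (simp del: of_nat_Suc)
  moreover have "ffact (x - 1) (int k) = (\<Prod>i<k. x - 1 - real i)"
    unfolding ffact_def by simp
  ultimately show ?thesis by (simp add: algebra_simps)
qed

lemma peel:
  assumes "Suc j \<le> N"
  shows "A (Suc j) N lam = (\<Sum>k=0..N - Suc j. ffact (real N + real (j + 2) * lam - 1) (int k)
            * A j (N - 1 - k) lam)"
proof -
  let ?S = "Sigma {0..N - Suc j} (\<lambda>k. idx (N - 1 - k) j)"
  have "(\<Sum>k=0..N - Suc j. ffact (real N + real (j + 2) * lam - 1) (int k) * A j (N - 1 - k) lam)
     = (\<Sum>k=0..N - Suc j. \<Sum>i'\<in>idx (N - 1 - k) j. ffact (real N + real (j + 2) * lam - 1) (int k) *
         ((\<Prod>l=1..j. ffact (real (N-1-k) + real (l + 1) * lam - real (\<Sum>m=l+1..j. i' m)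
                               - real (j - l) - 1) (int (i' l)))
          * ffact (real (N-1-k) + lam - real (\<Sum>l=1..j. i' l) - real j - 1)
                  (int (N-1-k) - int (\<Sum>l=1..j. i' l) - int j - 1)))"
    unfolding A_def by (simp add: sum_distrib_left)
  also have "\<dots> = (\<Sum>(k,i')\<in>?S. ffact (real N + real (j + 2) * lam - 1) (int k) *
         ((\<Prod>l=1..j. ffact (real (N-1-k) + real (l + 1) * lam - real (\<Sum>m=l+1..j. i' m)
                               - real (j - l) - 1) (int (i' l)))
          * ffact (real (N-1-k) + lam - real (\<Sum>l=1..j. i' l) - real j - 1)
                  (int (N-1-k) - int (\<Sum>l=1..j. i' l) - int j - 1)))"
    by (rule sum.Sigma) (auto simp: idx_finite)
  also have "\<dots> = A (Suc j) N lam"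
    unfolding A_def
  proof (rule sum.reindex_bij_witness[where i="\<lambda>i. (i (Suc j), i(Suc j := 0))"
          and j="\<lambda>p. (snd p)(Suc j := fst p)"])
    fix a assume a: "a \<in> ?S"
    then obtain k i' where ak: "a = (k, i')" and k: "k \<le> N - Suc j" and i': "i' \<in> idx (N - 1 - k) j" by auto
    have i'0: "i' (Suc j) = 0" using i' unfolding idx_def by auto
    show "(((snd a)(Suc j := fst a)) (Suc j), ((snd a)(Suc j := fst a))(Suc j := 0)) = a"
      using ak i'0 by auto
    have s: "(\<Sum>l=1..Suc j. (i'(Suc j := k)) l) = k + (\<Sum>l=1..j. i' l)"
      by (simp add: sum.cl_ivl_Suc)
    show "(snd a)(Suc j := fst a) \<in> idx N (Suc j)"
      using ak i' k s unfolding idx_def by auto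
    have ms: "(\<Sum>m=l+1..Suc j. (i'(Suc j := k)) m) = k + (\<Sum>m=l+1..j. i' m)" if "l \<in> {1..j}" for l
      using that by (simp add: sum.cl_ivl_Suc)
    have P: "(\<Prod>l=1..Suc j. ffact (real N + real (l + 1) * lam - real (\<Sum>m=l+1..Suc j. (i'(Suc j := k)) m)
                               - real (Suc j - l) - 1) (int ((i'(Suc j := k)) l)))
        = ffact (real N + real (j + 2) * lam - 1) (int k) *
          (\<Prod>l=1..j. ffact (real (N-1-k) + real (l + 1) * lam - real (\<Sum>m=l+1..j. i' m)
                               - real (j - l) - 1) (int (i' l)))"
    proof -
      have "(\<Prod>l=1..j. ffact (real N + real (l + 1) * lam - real (\<Sum>m=l+1..Suc j. (i'(Suc j := k)) m)
                               - real (Suc j - l) - 1) (int ((i'(Suc j := k)) l)))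
          = (\<Prod>l=1..j. ffact (real (N-1-k) + real (l + 1) * lam - real (\<Sum>m=l+1..j. i' m)
                               - real (j - l) - 1) (int (i' l)))"
      proof (rule prod.cong[OF refl])
        fix l assume l: "l \<in> {1..j}"
        have "real (N-1-k) = real N - 1 - real k" using k assms by (simp add: of_nat_diff)
        moreover have "real (Suc j - l) = real (j - l) + 1" using l by (simp add: of_nat_diff)
        ultimately show "ffact (real N + real (l + 1) * lam - real (\<Sum>m=l+1..Suc j. (i'(Suc j := k)) m)
                               - real (Suc j - l) - 1) (int ((i'(Suc j := k)) l))
           = ffact (real (N-1-k) + real (l + 1) * lam - real (\<Sum>m=l+1..j. i' m)
                               - real (j - l) - 1) (int (i' l))"
          using l ms[OF l] by (simp add: algebra_simps)
      qed
      thus ?thesis by (simp add: prod.cl_ivl_Suc algebra_simps)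
    qed
    have Q: "ffact (real N + lam - real (\<Sum>l=1..Suc j. (i'(Suc j := k)) l) - real (Suc j) - 1)
                  (int N - int (\<Sum>l=1..Suc j. (i'(Suc j := k)) l) - int (Suc j) - 1)
        = ffact (real (N-1-k) + lam - real (\<Sum>l=1..j. i' l) - real j - 1)
                  (int (N-1-k) - int (\<Sum>l=1..j. i' l) - int j - 1)"
    proof -
      have "real (N-1-k) = real N - 1 - real k" using k assms by (simp add: of_nat_diff)
      moreover have "int (N-1-k) = int N - 1 - int k" using k assms by (simp add: of_nat_diff)
      ultimately show ?thesis using s by (simp add: algebra_simps)
    qed
    show "(\<Prod>l=1..Suc j. ffact (real N + real (l + 1) * lam - real (\<Sum>m=l+1..Suc j. ((snd a)(Suc j := fst a)) m)
                               - real (Suc j - l) - 1) (int (((snd a)(Suc j := fst a)) l)))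
          * ffact (real N + lam - real (\<Sum>l=1..Suc j. ((snd a)(Suc j := fst a)) l) - real (Suc j) - 1)
                  (int N - int (\<Sum>l=1..Suc j. ((snd a)(Suc j := fst a)) l) - int (Suc j) - 1)
       = (case a of (k, i') \<Rightarrow> ffact (real N + real (j + 2) * lam - 1) (int k) *
         ((\<Prod>l=1..j. ffact (real (N-1-k) + real (l + 1) * lam - real (\<Sum>m=l+1..j. i' m)
                               - real (j - l) - 1) (int (i' l)))
          * ffact (real (N-1-k) + lam - real (\<Sum>l=1..j. i' l) - real j - 1)
                  (int (N-1-k) - int (\<Sum>l=1..j. i' l) - int j - 1)))"
      unfolding ak fst_conv snd_conv prod.case P Q by (simp only: mult.assoc)
  next
    fix b assume b: "b \<in> idx N (Suc j)"
    show "(snd (b (Suc j), b(Suc j := 0)))(Suc j := fst (b (Suc j), b(Suc j := 0))) = b" by auto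
    have s: "(\<Sum>l=1..Suc j. b l) = b (Suc j) + (\<Sum>l=1..j. b l)"
      by (simp add: sum.cl_ivl_Suc)
    have s2: "(\<Sum>l=1..j. (b(Suc j := 0)) l) = (\<Sum>l=1..j. b l)" by (rule sum.cong) auto
    show "(b (Suc j), b(Suc j := 0)) \<in> ?S"
      using b s s2 unfolding idx_def by auto
  qed
  finally show ?thesis ..
qed

lemma A_rec:
  assumes "Suc j \<le> N"
  shows "A (Suc j) (Suc N) lam = (real N + real (j + 2) * lam) * A (Suc j) N lam + A j N lam"
proof -
  let ?x = "real N + real (j + 2) * lam"
  have "A (Suc j) (Suc N) lam = (\<Sum>k=0..Suc (N - Suc j). ffact (real (Suc N) + real (j + 2) * lam - 1) (int k)
            * A j (Suc N - 1 - k) lam)"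
  proof -
    have eq: "Suc N - Suc j = Suc (N - Suc j)" using assms by simp
    show ?thesis by (subst peel) (use assms in simp, simp only: eq)
  qed
  also have "\<dots> = ffact (real (Suc N) + real (j + 2) * lam - 1) (int 0) * A j (Suc N - 1 - 0) lam +
     (\<Sum>k=0..N - Suc j. ffact (real (Suc N) + real (j + 2) * lam - 1) (int (Suc k))
            * A j (Suc N - 1 - Suc k) lam)"
    unfolding sum.atLeast0_atMost_Suc_shift comp_def by (rule refl)
  also have "\<dots> = A j N lam + ?x * (\<Sum>k=0..N - Suc j. ffact (real N + real (j + 2) * lam - 1) (int k)
            * A j (N - 1 - k) lam)"
  proof -
    have e1: "ffact (real (Suc N) + real (j + 2) * lam - 1) (int 0) = 1" by (simp add: ffact_def)
    have e2: "ffact (real (Suc N) + real (j + 2) * lam - 1) (int (Suc k)) * A j (Suc N - 1 - Suc k) lam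
       = ?x * (ffact (real N + real (j + 2) * lam - 1) (int k) * A j (N - 1 - k) lam)" for k
      unfolding ffact_Suc by (simp add: algebra_simps)
    show ?thesis unfolding e1 e2 sum_distrib_left[symmetric] by simp
  qed
  also have "\<dots> = ?x * A (Suc j) N lam + A j N lam"
    using peel[OF assms] by simp
  finally show ?thesis .
qed

lemma A_diag: "lam \<noteq> 0 \<Longrightarrow> A j j lam = 1 / lam"
proof (induction j)
  case 0
  then show ?case by (simp add: A_def idx_0 ffact_def)
next
  case (Suc j)
  have "A (Suc j) (Suc j) lam = A j j lam" using peel[of j "Suc j" lam] by (simp add: ffact_def)
  then show ?case using Suc by simp
qed

lemma A_0: "A 0 N lam = ffact (real N + lam - 1) (int N - 1)"
  by (simp add: A_def idx_0)

definition T :: "nat \<Rightarrow> nat \<Rightarrow> real \<Rightarrow> real" where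
  "T j N lam = (-1) ^ j * fact j * lam ^ j * A j N lam"

lemma coef_T: "j \<le> N \<Longrightarrow> lam \<noteq> 0 \<Longrightarrow> coef j N lam = T j N lam"
proof -
  assume a: "j \<le> N" "lam \<noteq> 0"
  show ?thesis
  proof (cases "j = 0")
    case True thus ?thesis by (simp add: coef_def T_def A_0)
  next
    case j0: False
    show ?thesis
    proof (cases "j = N")
      case True
      have p: "lam ^ N = lam * lam ^ (N - 1)" using j0 True
        by (metis One_nat_def Suc_pred neq0_conv power_Suc)
      have "coef j N lam = (-1) ^ N * lam ^ (N - 1) * fact N" using True j0 by (simp add: coef_def)
      moreover have "T j N lam = (-1) ^ N * fact N * lam ^ N * (1 / lam)"
        using True A_diag[OF a(2)] by (simp add: T_def)
      ultimately show ?thesis using p a(2) by simp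
    next
      case False thus ?thesis using j0 unfolding coef_def T_def A_def by simp
    qed
  qed
qed

definition d :: "nat \<Rightarrow> nat \<Rightarrow> real \<Rightarrow> real" where
  "d N j lam = (if j \<le> N then T j N lam else 0)"

lemma T_rec:
  assumes "lam \<noteq> 0" "j \<le> Suc N"
  shows "T j (Suc N) lam = (real N + lam * real (j + 1)) * d N j lam - lam * real j * d N (j - 1) lam"
proof (cases j)
  case 0
  have "ffact (real N + lam) (int N) = (real N + lam) * ffact (real N + lam - 1) (int N - 1)"
  proof (cases N)
    case 0 thus ?thesis using assms(1) by (simp add: ffact_def)
  next
    case (Suc n)
    have "int N - 1 = int n" using Suc by simp
    thus ?thesis using Suc ffact_Suc[of "real N + lam" n] by simp
  qed
  thus ?thesis using 0 by (simp add: T_def d_def A_0 algebra_simps)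
next
  case (Suc j')
  show ?thesis
  proof (cases "j = Suc N")
    case True
    have "T (Suc N) (Suc N) lam = (- lam * real (Suc N)) * T N N lam"
      using assms(1) by (simp add: T_def A_diag fact_Suc power_Suc field_simps)
    thus ?thesis using True by (simp add: d_def algebra_simps)
  next
    case False
    hence le: "Suc j' \<le> N" using assms Suc by simp
    show ?thesis using A_rec[OF le, of lam] le Suc
      by (simp add: T_def d_def fact_Suc power_Suc algebra_simps)
  qed
qed

lemma poly_rec:
  assumes "lam \<noteq> 0"
  shows "(\<Sum>j=0..Suc N. T j (Suc N) lam * x ^ Suc j) =
    (\<Sum>j=0..N. real N * (T j N lam * x ^ Suc j) + lam * (T j N lam * (real (Suc j) * x ^ j) * (x - x^2)))"
proof -
  have "(\<Sum>j=0..Suc N. T j (Suc N) lam * x ^ Suc j) =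
     (\<Sum>j=0..Suc N. (real N + lam * real (j + 1)) * d N j lam * x ^ Suc j)
     - (\<Sum>j=0..Suc N. lam * real j * d N (j - 1) lam * x ^ Suc j)"
    unfolding sum_subtractf[symmetric]
    by (rule sum.cong[OF refl]) (simp add: T_rec[OF assms] algebra_simps)
  also have "(\<Sum>j=0..Suc N. (real N + lam * real (j + 1)) * d N j lam * x ^ Suc j)
     = (\<Sum>j=0..N. (real N + lam * real (j + 1)) * T j N lam * x ^ Suc j)"
    by (simp add: sum.atLeast0_atMost_Suc d_def)
  also have "(\<Sum>j=0..Suc N. lam * real j * d N (j - 1) lam * x ^ Suc j)
     = (\<Sum>j=0..N. lam * real (Suc j) * T j N lam * x ^ Suc (Suc j))"
    unfolding sum.atLeast0_atMost_Suc_shift comp_def by (simp add: d_def)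
  finally show ?thesis
    unfolding sum_subtractf[symmetric]
    by (simp add: power2_eq_square algebra_simps)
qed

lemma F_deriv:
  assumes "t > -1"
  shows "(F lam has_real_derivative (-lam/(1+t) * (F lam t - F lam t ^ 2))) (at t)"
proof -
  have a: "1 + t > 0" using assms by simp
  have u: "((\<lambda>s. (1+s) powr lam) has_real_derivative lam * (1+t) powr (lam - 1) * 1) (at t)"
    by (rule DERIV_fun_powr[simplified]) (auto intro!: derivative_eq_intros simp: a)
  have u1: "((\<lambda>s. (1+s) powr lam + 1) has_real_derivative lam * (1+t) powr (lam - 1)) (at t)"
    using DERIV_add[OF u DERIV_const[of 1]] by simp
  have pos: "(1+t) powr lam + 1 \<noteq> 0" by (smt (verit) powr_ge_zero)
  have "((\<lambda>s. inverse ((1+s) powr lam + 1)) has_real_derivative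
      - ((lam * (1+t) powr (lam - 1)) * inverse (((1+t) powr lam + 1) ^ Suc (Suc 0)))) (at t)"
    by (rule DERIV_inverse_fun[OF u1 pos])
  moreover have "F lam = (\<lambda>s. inverse ((1+s) powr lam + 1))"
    by (auto simp: F_def fun_eq_iff divide_inverse)
  moreover have "- ((lam * (1+t) powr (lam - 1)) * inverse (((1+t) powr lam + 1) ^ Suc (Suc 0)))
     = -lam/(1+t) * (F lam t - F lam t ^ 2)"
  proof -
    have v: "(1+t) powr (lam - 1) = (1+t) powr lam / (1+t)" using a by (simp add: powr_diff)
    have g0: "- ((lam * ((w - 1) / b)) * inverse (w ^ Suc (Suc 0))) = -lam/b * (1/w - (1/w) ^ 2)"
      if "b > 0" "w \<noteq> 0" for w b :: real
      using that by (simp add: field_simps power2_eq_square)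
    have g: "- ((lam * (u / b)) * inverse ((u + 1) ^ Suc (Suc 0))) = -lam/b * (1/(u+1) - (1/(u+1)) ^ 2)"
      if "b > 0" "u + 1 \<noteq> 0" for u b :: real
      using g0[OF that] by simp
    show ?thesis unfolding v F_def using g[OF a pos] by simp
  qed
  ultimately show ?thesis by simp
qed

definition Gen :: "real \<Rightarrow> nat \<Rightarrow> real \<Rightarrow> real" where
  "Gen lam N t = (-1) ^ N * lam / (1 + t) ^ N * (\<Sum>j=0..N. T j N lam * F lam t ^ Suc j)"

lemma Gen_deriv:
  assumes "lam \<noteq> 0" "t > -1"
  shows "(Gen lam N has_real_derivative Gen lam (Suc N) t) (at t)"
proof -
  have a: "1 + t > 0" using assms by simp
  define x where "x = F lam t"
  define F' where "F' = -lam/(1+t) * (x - x ^ 2)"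
  have Fd: "(F lam has_real_derivative F') (at t)" unfolding F'_def x_def by (rule F_deriv[OF assms(2)])
  have h1: "((\<lambda>s. \<Sum>j=0..N. T j N lam * F lam s ^ Suc j) has_real_derivative
      (\<Sum>j=0..N. T j N lam * (real (Suc j) * (F' * x ^ (Suc j - Suc 0))))) (at t)"
    unfolding x_def
    by (intro DERIV_sum DERIV_cmult DERIV_power Fd)
  have d0: "((\<lambda>s. (1+s)^N) has_real_derivative real N * (1+t)^(N - Suc 0)) (at t)"
    by (auto intro!: derivative_eq_intros)
  have d1: "((\<lambda>s. inverse ((1+s)^N)) has_real_derivative
      -(real N * (1+t)^(N - Suc 0) * inverse (((1+t)^N)^Suc (Suc 0)))) (at t)"
    by (rule DERIV_inverse_fun[OF d0]) (use a in simp)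
  have eq: "-(real N * (1+t)^(N - Suc 0) * inverse (((1+t)^N)^Suc (Suc 0))) = - real N / (1+t)^Suc N"
  proof (cases N)
    case 0 thus ?thesis by simp
  next
    case (Suc n)
    have ex: "Suc n * Suc (Suc 0) = n + Suc (Suc n)" by simp
    have "((1+t)^Suc n)^Suc(Suc 0) = (1+t)^n * (1+t)^Suc(Suc n)"
      by (simp only: power_mult[symmetric] power_add[symmetric] ex)
    moreover have gen: "-(m * c * inverse (c * e)) = - m / e" if "c \<noteq> 0" for m c e :: real
      using that by (simp add: field_simps)
    moreover have "(1+t)^n \<noteq> 0" using a by simp
    ultimately show ?thesis using Suc by (simp only: gen diff_Suc_Suc diff_zero)
  qed
  have h2: "((\<lambda>s. (-1) ^ N * lam * inverse ((1 + s) ^ N)) has_real_derivative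
      (-1) ^ N * lam * (- real N / (1+t) ^ Suc N)) (at t)"
    using DERIV_cmult[OF d1, of "(-1)^N * lam"] unfolding eq .
  have GG: "Gen lam N = (\<lambda>s. ((-1) ^ N * lam * inverse ((1 + s) ^ N)) * (\<Sum>j=0..N. T j N lam * F lam s ^ Suc j))"
    by (simp add: fun_eq_iff Gen_def divide_inverse)
  have "(Gen lam N has_real_derivative
      (-1) ^ N * lam * (- real N / (1+t) ^ Suc N) * (\<Sum>j=0..N. T j N lam * x ^ Suc j) +
      (-1) ^ N * lam / (1 + t) ^ N * (\<Sum>j=0..N. T j N lam * (real (Suc j) * (F' * x ^ (Suc j - Suc 0))))) (at t)"
    unfolding GG using DERIV_mult[OF h2 h1] by (simp add: x_def divide_inverse ac_simps)
  moreover have "(-1) ^ N * lam * (- real N / (1+t) ^ Suc N) * (\<Sum>j=0..N. T j N lam * x ^ Suc j) +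
      (-1) ^ N * lam / (1 + t) ^ N * (\<Sum>j=0..N. T j N lam * (real (Suc j) * (F' * x ^ (Suc j - Suc 0))))
      = Gen lam (Suc N) t"
  proof -
    define S0 where "S0 = (\<Sum>j=0..N. T j N lam * x ^ Suc j)"
    define S1 where "S1 = (\<Sum>j=0..N. T j N lam * (real (Suc j) * x ^ j) * (x - x^2))"
    have e1: "(\<Sum>j=0..N. T j N lam * (real (Suc j) * (F' * x ^ (Suc j - Suc 0)))) = -lam/(1+t) * S1"
      unfolding S1_def F'_def sum_distrib_left by (rule sum.cong) (auto simp: field_simps)
    have e2: "Gen lam (Suc N) t = (-1) ^ Suc N * lam / (1 + t) ^ Suc N * (real N * S0 + lam * S1)"
      unfolding Gen_def poly_rec[OF assms(1)] S0_def S1_def x_def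
      by (simp add: sum.distrib sum_distrib_left)
    show ?thesis unfolding e1 e2 S0_def[symmetric] using a
      by (simp add: field_simps power_Suc add_divide_distrib)
  qed
  ultimately show ?thesis by simp
qed

lemma iter:
  assumes "lam \<noteq> 0"
  shows "\<forall>t > -1. (deriv ^^ N) (F lam) t = Gen lam N t"
proof (induction N)
  case 0
  show ?case using assms by (simp add: Gen_def T_def A_0 ffact_def)
next
  case (Suc N)
  show ?case
  proof (intro allI impI)
    fix t :: real assume t: "t > -1"
    have "(((deriv ^^ N) (F lam)) has_real_derivative Gen lam (Suc N) t) (at t)"
      by (rule has_field_derivative_transform_within_open[OF Gen_deriv[OF assms t], of "{-1<..}"])
         (use t Suc in auto)
    thus "(deriv ^^ Suc N) (F lam) t = Gen lam (Suc N) t"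
      by (simp add: DERIV_imp_deriv)
  qed
qed

theorem theorem2:
  fixes lam t :: real and N :: nat
  assumes "lam \<noteq> 0" and "N \<ge> 1" and "t > -1"
  shows "(deriv ^^ N) (F lam) t =
           (-1) ^ N * lam / (1 + t) ^ N * (\<Sum>i=1..N+1. coef (i - 1) N lam * F lam t ^ i)"
proof -
  have "(\<Sum>i=1..N+1. coef (i - 1) N lam * F lam t ^ i) = (\<Sum>j=0..N. coef j N lam * F lam t ^ Suc j)"
  proof -
    have "{1..N+1} = Suc ` {0..N}" by (simp add: image_Suc_atLeastAtMost)
    show ?thesis unfolding \<open>{1..N+1} = Suc ` {0..N}\<close> by (subst sum.reindex) auto
  qed
  also have "\<dots> = (\<Sum>j=0..N. T j N lam * F lam t ^ Suc j)"
    by (rule sum.cong) (auto simp: coef_T assms(1))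
  finally show ?thesis using iter[OF assms(1)] assms(3) by (simp add: Gen_def)
qed

end
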